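(* Let $G$ be a finite group. Then the co-prime graph $\Gamma_{CP}(G)$ is minimally connected if and only if $G$ is a $p$-group for some prime $p$.
   Context: The co-prime graph $\Gamma_{CP}(G)$ of a finite group $G$ is the simple undirected graph with vertex set $G$ in which two distinct elements $x,y$ are adjacent if and only if $\gcd(o(x),o(y))=1$. A $p$-group is a group of order $p^n$ for a prime $p$. For a connected graph $\Gamma$, a vertex cut-set is a set $S$ of vertices such that $\Gamma-S$ is disconnected or has just one vertex, and the vertex connectivity $\kappa(\Gamma)$ is the smallest size of a vertex cut-set. $\Gamma$ is minimally connected if $\kappa(\Gamma-\epsilon)=\kappa(\Gamma)-1$ for every edge $\epsilon$ of $\Gamma$. *)

theory Defs
  imports "HOL-Algebra.Algebra"
begin

text \<open>Simple graphs are given by a vertex set V and an adjacency predicate E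
  (only its restriction to V and to distinct vertices matters).\<close>

definition graph_rel :: "'a set \<Rightarrow> ('a \<Rightarrow> 'a \<Rightarrow> bool) \<Rightarrow> ('a \<times> 'a) set" where
  "graph_rel V E = {(a, b). a \<in> V \<and> b \<in> V \<and> a \<noteq> b \<and> E a b}"

definition graph_connected :: "'a set \<Rightarrow> ('a \<Rightarrow> 'a \<Rightarrow> bool) \<Rightarrow> bool" where
  "graph_connected V E \<longleftrightarrow> (\<forall>x\<in>V. \<forall>y\<in>V. (x, y) \<in> (graph_rel V E)\<^sup>*)"

definition vertex_cut :: "'a set \<Rightarrow> ('a \<Rightarrow> 'a \<Rightarrow> bool) \<Rightarrow> 'a set \<Rightarrow> bool" where
  "vertex_cut V E S \<longleftrightarrow> S \<subseteq> V \<and> (card (V - S) = 1 \<or> \<not> graph_connected (V - S) E)"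

definition vertex_connectivity :: "'a set \<Rightarrow> ('a \<Rightarrow> 'a \<Rightarrow> bool) \<Rightarrow> nat" where
  "vertex_connectivity V E = (LEAST k. \<exists>S. vertex_cut V E S \<and> card S = k)"

definition delete_edge :: "('a \<Rightarrow> 'a \<Rightarrow> bool) \<Rightarrow> 'a \<Rightarrow> 'a \<Rightarrow> ('a \<Rightarrow> 'a \<Rightarrow> bool)" where
  "delete_edge E x y = (\<lambda>a b. E a b \<and> {a, b} \<noteq> {x, y})"

definition minimally_connected :: "'a set \<Rightarrow> ('a \<Rightarrow> 'a \<Rightarrow> bool) \<Rightarrow> bool" where
  "minimally_connected V E \<longleftrightarrow>
     (\<forall>x\<in>V. \<forall>y\<in>V. x \<noteq> y \<and> E x y \<longrightarrow>
        vertex_connectivity V (delete_edge E x y) = vertex_connectivity V E - 1)"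

definition coprime_adj :: "('a, 'b) monoid_scheme \<Rightarrow> 'a \<Rightarrow> 'a \<Rightarrow> bool" where
  "coprime_adj G x y \<longleftrightarrow> x \<noteq> y \<and> gcd (group.ord G x) (group.ord G y) = 1"

definition is_p_group :: "('a, 'b) monoid_scheme \<Rightarrow> bool" where
  "is_p_group G \<longleftrightarrow> (\<exists>p n. Factorial_Ring.prime (p::nat) \<and> order G = p ^ n)"

end

theory Submission
  imports Defs
begin


lemma isolated_rtrancl:
  assumes "\<forall>z\<in>V. z \<noteq> x \<longrightarrow> \<not> E x z" and "(x, y) \<in> (graph_rel V E)\<^sup>*"
  shows "y = x"
  using assms(2)
proof (cases rule: converse_rtranclE)
  case (step z)
  then show ?thesis using assms(1) by (auto simp: graph_rel_def)
qed simp

lemma isolated_not_connected: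
  assumes "x \<in> V" "y \<in> V" "x \<noteq> y" "\<forall>z\<in>V. z \<noteq> x \<longrightarrow> \<not> E x z"
  shows "\<not> graph_connected V E"
  using assms isolated_rtrancl unfolding graph_connected_def by metis

lemma hub_connected:
  assumes "h \<in> V" "\<forall>w\<in>V. (w, h) \<in> (graph_rel V E)\<^sup>* \<and> (h, w) \<in> (graph_rel V E)\<^sup>*"
  shows "graph_connected V E"
  unfolding graph_connected_def using assms by (meson rtrancl_trans)

lemma edge_rtrancl:
  assumes "a \<in> V" "b \<in> V" "a \<noteq> b" "E a b"
  shows "(a, b) \<in> (graph_rel V E)\<^sup>*"
  using assms by (auto simp: graph_rel_def)

lemma vc_le:
  assumes "vertex_cut V E S"
  shows "vertex_connectivity V E \<le> card S"
  unfolding vertex_connectivity_def using assms by (intro Least_le) auto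

lemma vc_ge:
  assumes "finite V" "V \<noteq> {}" "\<And>S. vertex_cut V E S \<Longrightarrow> k \<le> card S"
  shows "k \<le> vertex_connectivity V E"
proof -
  obtain v where v: "v \<in> V" using assms(2) by auto
  have "vertex_cut V E (V - {v})"
    unfolding vertex_cut_def using v by (simp add: Diff_Diff_Int Int_absorb1)
  then have ex: "\<exists>k. \<exists>S. vertex_cut V E S \<and> card S = k" by blast
  show ?thesis unfolding vertex_connectivity_def
    using LeastI_ex[OF ex] assms(3) by (metis (no_types, lifting))
qed



locale fgrp = group +
  assumes fin: "finite (carrier G)"
begin

definition nbr where "nbr x = {z \<in> carrier G. coprime_adj G x z}"

lemma adj_one: "z \<in> carrier G \<Longrightarrow> z \<noteq> \<one> \<Longrightarrow> coprime_adj G \<one> z \<and> coprime_adj G z \<one>"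
  by (auto simp: coprime_adj_def)

lemma adj_sym: "coprime_adj G x z \<Longrightarrow> coprime_adj G z x"
  by (auto simp: coprime_adj_def gcd.commute)

lemma conn: "graph_connected (carrier G) (coprime_adj G)"
proof (rule hub_connected[where h=\<one>])
  show "\<one> \<in> carrier G" by simp
  show "\<forall>w\<in>carrier G. (w, \<one>) \<in> (graph_rel (carrier G) (coprime_adj G))\<^sup>* \<and> (\<one>, w) \<in> (graph_rel (carrier G) (coprime_adj G))\<^sup>*"
  proof
    fix w assume w: "w \<in> carrier G"
    show "(w, \<one>) \<in> (graph_rel (carrier G) (coprime_adj G))\<^sup>* \<and> (\<one>, w) \<in> (graph_rel (carrier G) (coprime_adj G))\<^sup>*"
    proof (cases "w = \<one>")
      case False
      then show ?thesis using w adj_one[OF w False] by (auto intro!: edge_rtrancl)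
    qed simp
  qed
qed

lemma kappa_pos:
  assumes "card (carrier G) \<noteq> 1"
  shows "1 \<le> vertex_connectivity (carrier G) (coprime_adj G)"
proof (rule vc_ge)
  show "finite (carrier G)" by (rule fin)
  show "carrier G \<noteq> {}" by auto
  fix S assume "vertex_cut (carrier G) (coprime_adj G) S"
  then show "1 \<le> card S" using assms conn fin
    by (metis Diff_empty One_nat_def card_0_eq finite_subset less_one not_le vertex_cut_def)
qed

lemma kappa_le_deg:
  assumes y: "y \<in> carrier G"
  shows "vertex_connectivity (carrier G) (coprime_adj G) \<le> card (nbr y)"
proof (rule vc_le)
  show "vertex_cut (carrier G) (coprime_adj G) (nbr y)"
    unfolding vertex_cut_def
  proof (intro conjI)
    show "nbr y \<subseteq> carrier G" by (auto simp: nbr_def)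
    show "card (carrier G - nbr y) = 1 \<or> \<not> graph_connected (carrier G - nbr y) (coprime_adj G)"
    proof (cases "card (carrier G - nbr y) = 1")
      case False
      have yin: "y \<in> carrier G - nbr y" using y by (auto simp: nbr_def coprime_adj_def)
      have "finite (carrier G - nbr y)" using fin by auto
      have "carrier G - nbr y \<noteq> {y}" using False by auto
      then obtain w where w: "w \<in> carrier G - nbr y" "w \<noteq> y"
        using yin by blast
      have "\<not> graph_connected (carrier G - nbr y) (coprime_adj G)"
        by (rule isolated_not_connected[OF yin w(1)]) (use w y in \<open>auto simp: nbr_def\<close>)
      then show ?thesis by blast
    qed simp
  qed
qed

end


context fgrp begin

lemma rel_del_eq:
  assumes "a \<in> S \<or> b \<in> S"
  shows "graph_rel (carrier G - S) (delete_edge E a b) = graph_rel (carrier G - S) E"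
  using assms unfolding graph_rel_def delete_edge_def by (auto simp: doubleton_eq_iff)

lemma deg_le_kappa:
  assumes mc: "minimally_connected (carrier G) (coprime_adj G)"
    and n2: "card (carrier G) \<noteq> 1"
    and x: "x \<in> carrier G" "x \<noteq> \<one>"
  shows "card (nbr x) \<le> vertex_connectivity (carrier G) (coprime_adj G)"
proof (rule ccontr)
  define V where "V = carrier G"
  define E where "E = coprime_adj G"
  define E' where "E' = delete_edge E \<one> x"
  define k where "k = vertex_connectivity V E"
  assume "\<not> card (nbr x) \<le> vertex_connectivity (carrier G) (coprime_adj G)"
  then have big: "k < card (nbr x)" by (simp add: k_def V_def E_def)
  have k1: "1 \<le> k" using kappa_pos[OF n2] by (simp add: k_def V_def E_def)
  have e1: "coprime_adj G \<one> x" using adj_one x by blast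
  have "vertex_connectivity V E' = k - 1"
    using mc e1 x unfolding minimally_connected_def E'_def k_def V_def E_def by auto
  moreover have "k \<le> vertex_connectivity V E'"
  proof (rule vc_ge)
    show "finite V" using fin by (simp add: V_def)
    show "V \<noteq> {}" by (auto simp: V_def)
    fix S assume cut: "vertex_cut V E' S"
    have SV: "S \<subseteq> V" using cut by (simp add: vertex_cut_def)
    have finS: "finite S" using SV fin finite_subset V_def by blast
    show "k \<le> card S"
    proof (cases "\<one> \<in> S \<or> x \<in> S")
      case True
      have "graph_rel (V - S) E' = graph_rel (V - S) E"
        unfolding E'_def V_def by (rule rel_del_eq[OF True])
      then have "vertex_cut V E S" using cut
        by (simp add: vertex_cut_def graph_connected_def)
      then show ?thesis unfolding k_def by (rule vc_le)
    next
      case False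
      have in1: "\<one> \<in> V - S" and inx: "x \<in> V - S" using False x by (auto simp: V_def)
      have "card (V - S) \<noteq> 1"
      proof
        assume "card (V - S) = 1"
        then obtain u where "V - S = {u}" by (meson card_1_singletonE)
        then show False using in1 inx x by auto
      qed
      then have nc: "\<not> graph_connected (V - S) E'" using cut by (simp add: vertex_cut_def)
      have sub: "nbr x - {\<one>} \<subseteq> S"
      proof
        fix z assume z: "z \<in> nbr x - {\<one>}"
        show "z \<in> S"
        proof (rule ccontr)
          assume zS: "z \<notin> S"
          have zV: "z \<in> carrier G" "coprime_adj G x z" "z \<noteq> \<one>" using z by (auto simp: nbr_def)
          have zx: "z \<noteq> x" using zV by (auto simp: coprime_adj_def)
          have "graph_connected (V - S) E'"
          proof (rule hub_connected[OF in1], intro ballI)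
            fix w assume w: "w \<in> V - S"
            show "(w, \<one>) \<in> (graph_rel (V - S) E')\<^sup>* \<and> (\<one>, w) \<in> (graph_rel (V - S) E')\<^sup>*"
            proof (cases "w = \<one>")
              case True then show ?thesis by simp
            next
              case w1: False
              show ?thesis
              proof (cases "w = x")
                case False
                have "E' w \<one>" "E' \<one> w" using adj_one[of w] w w1 False
                  by (auto simp: E'_def E_def V_def delete_edge_def doubleton_eq_iff)
                then show ?thesis using w w1 in1 by (auto intro!: edge_rtrancl)
              next
                case True
                have zin: "z \<in> V - S" using zV zS by (simp add: V_def)
                have "E' x z" "E' z x" "E' z \<one>" "E' \<one> z"
                  using zV zx adj_sym[of x z] adj_one[of z]
                  by (auto simp: E'_def E_def delete_edge_def doubleton_eq_iff)
                then have "(x, z) \<in> (graph_rel (V - S) E')\<^sup>*" "(z, \<one>) \<in> (graph_rel (V - S) E')\<^sup>*"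
                  "(\<one>, z) \<in> (graph_rel (V - S) E')\<^sup>*" "(z, x) \<in> (graph_rel (V - S) E')\<^sup>*"
                  using zin inx in1 zx zV(3) by (auto intro!: edge_rtrancl)
                then show ?thesis using True by (meson rtrancl_trans)
              qed
            qed
          qed
          then show False using nc by simp
        qed
      qed
      have "card (nbr x - {\<one>}) = card (nbr x) - 1"
        using adj_sym[OF e1] fin by (intro card_Diff_singleton) (auto simp: nbr_def)
      moreover have "card (nbr x - {\<one>}) \<le> card S" using sub finS by (rule card_mono[rotated])
      ultimately show ?thesis using big by linarith
    qed
  qed
  ultimately show False using k1 by linarith
qed

end


context fgrp begin

lemma pgroup_nonadj:
  assumes p: "Factorial_Ring.prime (p::nat)" and o: "order G = p ^ m"
    and xy: "x \<in> carrier G" "y \<in> carrier G" "x \<noteq> \<one>" "y \<noteq> \<one>"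
  shows "\<not> coprime_adj G x y"
proof -
  have pd: "p dvd ord u" if "u \<in> carrier G" "u \<noteq> \<one>" for u
  proof -
    have "ord u dvd p ^ m" using ord_dvd_group_order[OF that(1)] o by simp
    then obtain i where "i \<le> m" "ord u = p ^ i" using divides_primepow_nat[OF p] by blast
    moreover have "ord u \<noteq> 1" using ord_eq_1 that by blast
    ultimately have "i \<noteq> 0" "ord u = p ^ i" by auto
    then show ?thesis by (simp add: dvd_power)
  qed
  have "p dvd gcd (ord x) (ord y)" using pd xy by simp
  moreover have "\<not> p dvd 1" using p by (metis not_prime_unit)
  ultimately show ?thesis unfolding coprime_adj_def by metis
qed

lemma pgroup_mc:
  assumes p: "Factorial_Ring.prime (p::nat)" and o: "order G = p ^ m"
  shows "minimally_connected (carrier G) (coprime_adj G)"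
  unfolding minimally_connected_def
proof (intro ballI impI)
  fix x y assume x: "x \<in> carrier G" and y: "y \<in> carrier G" and e: "x \<noteq> y \<and> coprime_adj G x y"
  have n2: "card (carrier G) \<noteq> 1"
  proof
    assume "card (carrier G) = 1"
    then obtain u where "carrier G = {u}" by (meson card_1_singletonE)
    then show False using x y e by auto
  qed
  have k: "vertex_connectivity (carrier G) (coprime_adj G) = 1"
  proof (rule antisym)
    show "1 \<le> vertex_connectivity (carrier G) (coprime_adj G)" by (rule kappa_pos[OF n2])
    have "vertex_cut (carrier G) (coprime_adj G) {\<one>}"
      unfolding vertex_cut_def
    proof (intro conjI)
      show "{\<one>} \<subseteq> carrier G" by simp
      show "card (carrier G - {\<one>}) = 1 \<or> \<not> graph_connected (carrier G - {\<one>}) (coprime_adj G)"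
      proof (cases "card (carrier G - {\<one>}) = 1")
        case False
        have "carrier G - {\<one>} \<noteq> {}"
        proof
          assume "carrier G - {\<one>} = {}"
          then have "carrier G = {\<one>}" using one_closed by blast
          then show False using n2 by simp
        qed
        then obtain w where w: "w \<in> carrier G - {\<one>}" by blast
        have "carrier G - {\<one>} \<noteq> {w}"
        proof
          assume "carrier G - {\<one>} = {w}"
          then have "card (carrier G - {\<one>}) = 1" by simp
          then show False using False by simp
        qed
        then obtain w2 where w2: "w2 \<in> carrier G - {\<one>}" "w2 \<noteq> w" using w by blast
        have "\<not> graph_connected (carrier G - {\<one>}) (coprime_adj G)"
          by (rule isolated_not_connected[OF w w2(1) w2(2)[symmetric]])
             (intro ballI impI pgroup_nonadj[OF p o], use w in auto)
        then show ?thesis by blast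
      qed simp
    qed
    then show "vertex_connectivity (carrier G) (coprime_adj G) \<le> 1"
      using vc_le[of "carrier G" "coprime_adj G" "{\<one>}"] by simp
  qed
  obtain w where w: "w \<in> carrier G" "w \<noteq> \<one>" "{x, y} = {\<one>, w}"
  proof (cases "x = \<one>")
    case True
    then show ?thesis using that[of y] y e by auto
  next
    case False
    then have "y = \<one>" using pgroup_nonadj[OF p o x y] e by blast
    moreover have "{x, \<one>} = {\<one>, x}" by blast
    ultimately show ?thesis using that[of x] x False by simp
  qed
  have "\<not> graph_connected (carrier G) (delete_edge (coprime_adj G) x y)"
  proof (rule isolated_not_connected[OF w(1) one_closed w(2)], intro ballI impI)
    fix z assume z: "z \<in> carrier G" "z \<noteq> w"
    show "\<not> delete_edge (coprime_adj G) x y w z"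
    proof (cases "z = \<one>")
      case True
      have "{w, z} = {x, y}" using True w(3) by (simp add: insert_commute)
      then show ?thesis by (simp add: delete_edge_def)
    next
      case False then show ?thesis using pgroup_nonadj[OF p o w(1) z(1) w(2)] by (simp add: delete_edge_def)
    qed
  qed
  then have "vertex_cut (carrier G) (delete_edge (coprime_adj G) x y) {}"
    by (simp add: vertex_cut_def)
  then have "vertex_connectivity (carrier G) (delete_edge (coprime_adj G) x y) = 0"
    using vc_le[of "carrier G" "delete_edge (coprime_adj G) x y" "{}"] by simp
  then show "vertex_connectivity (carrier G) (delete_edge (coprime_adj G) x y) =
       vertex_connectivity (carrier G) (coprime_adj G) - 1" using k by simp
qed

end


lemma gcd_prime_one_iff:
  fixes p n :: nat
  assumes "Factorial_Ring.prime p"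
  shows "gcd p n = 1 \<longleftrightarrow> \<not> p dvd n"
proof
  assume "gcd p n = 1"
  then show "\<not> p dvd n" using assms by (metis gcd_nat.absorb1 not_prime_1)
next
  assume "\<not> p dvd n"
  then show "gcd p n = 1" using prime_imp_coprime[OF assms] by (simp add: coprime_iff_gcd_eq_1)
qed

context fgrp begin

lemma pow_conj:
  assumes "a \<in> carrier G" "z \<in> carrier G"
  shows "(a \<otimes> z \<otimes> inv a) [^] (n::nat) = a \<otimes> z [^] n \<otimes> inv a"
proof (induction n)
  case 0
  then show ?case using assms by (simp add: r_inv)
next
  case (Suc n)
  have "(a \<otimes> z \<otimes> inv a) [^] Suc n = (a \<otimes> z [^] n \<otimes> inv a) \<otimes> (a \<otimes> z \<otimes> inv a)"
    using Suc by simp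
  also have "\<dots> = a \<otimes> (z [^] n \<otimes> z) \<otimes> inv a"
  proof -
    have "inv a \<otimes> (a \<otimes> (z \<otimes> inv a)) = z \<otimes> inv a"
      using assms by (metis l_inv l_one m_assoc inv_closed m_closed)
    then show ?thesis using assms by (simp add: m_assoc)
  qed
  finally show ?case by simp
qed

lemma ord_conj:
  assumes "a \<in> carrier G" "z \<in> carrier G"
  shows "ord (a \<otimes> z \<otimes> inv a) = ord z"
proof -
  have "(a \<otimes> z \<otimes> inv a) [^] n = \<one> \<longleftrightarrow> z [^] n = \<one>" for n :: nat
  proof -
    have "a \<otimes> z [^] n \<otimes> inv a = \<one> \<longleftrightarrow> z [^] n = \<one>"
      using assms by (metis inv_closed m_closed nat_pow_closed r_inv r_one l_one m_assoc
          inv_comm l_cancel_one' r_cancel_one' one_closed)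
    then show ?thesis using pow_conj[OF assms] by simp
  qed
  then show ?thesis using assms
    by (simp add: ord_unique pow_eq_id)
qed

lemma conj_iter:
  assumes "a \<in> carrier G" "z \<in> carrier G"
  shows "((\<lambda>w. a \<otimes> w \<otimes> inv a) ^^ i) z = a [^] i \<otimes> z \<otimes> inv (a [^] i)"
proof (induction i)
  case 0
  then show ?case using assms by simp
next
  case (Suc i)
  have "((\<lambda>w. a \<otimes> w \<otimes> inv a) ^^ Suc i) z = a \<otimes> (a [^] i \<otimes> z \<otimes> inv (a [^] i)) \<otimes> inv a"
    using Suc by simp
  also have "\<dots> = (a \<otimes> a [^] i) \<otimes> z \<otimes> (inv (a [^] i) \<otimes> inv a)"
    using assms by (simp add: m_assoc)
  also have "\<dots> = a [^] Suc i \<otimes> z \<otimes> inv (a [^] Suc i)"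
  proof -
    have c: "a \<otimes> a [^] i = a [^] i \<otimes> a" using assms nat_pow_Suc2[of a i] by simp
    have "a [^] Suc i = a \<otimes> a [^] i" using assms nat_pow_Suc2 by blast
    moreover have "inv (a \<otimes> a [^] i) = inv (a [^] i) \<otimes> inv a"
      using assms by (simp add: inv_mult_group)
    ultimately show ?thesis by simp
  qed
  finally show ?case .
qed

lemma mixed:
  assumes c: "c \<in> carrier G" and z: "z \<in> carrier G" and cm: "c \<otimes> z = z \<otimes> c"
    and oc: "ord c = p" and p: "Factorial_Ring.prime p" and np: "\<not> p dvd ord z"
    and r: "Factorial_Ring.prime r" and rd: "r dvd ord z"
  shows "p dvd ord (c \<otimes> z) \<and> r dvd ord (c \<otimes> z)"
proof -
  define m where "m = ord (c \<otimes> z)"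
  have m1: "(c \<otimes> z) [^] m = \<one>" unfolding m_def using c z by simp
  have pw: "(c \<otimes> z) [^] k = c [^] k \<otimes> z [^] k" for k :: nat
    using pow_mult_distrib[OF cm c z] .
  have "(c \<otimes> z) [^] (m * ord z) = \<one>"
    using m1 c z by (metis m_closed nat_pow_one nat_pow_pow)
  then have "c [^] (m * ord z) = \<one>"
    using pw[of "m * ord z"] z c by (metis mult.commute nat_pow_one nat_pow_pow pow_ord_eq_1 r_one nat_pow_closed)
  then have "p dvd m * ord z" using c oc by (simp add: pow_eq_id)
  then have pm: "p dvd m" using np p by (simp add: prime_dvd_mult_iff)
  have "(c \<otimes> z) [^] (m * p) = \<one>"
    using m1 c z by (metis m_closed nat_pow_one nat_pow_pow)
  then have "z [^] (m * p) = \<one>"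
    using pw[of "m * p"] z c oc by (metis mult.commute nat_pow_one nat_pow_pow pow_ord_eq_1 l_one nat_pow_closed)
  then have "ord z dvd m * p" using z by (simp add: pow_eq_id)
  then have "r dvd m * p" using rd dvd_trans by blast
  moreover have "\<not> r dvd p" using np rd p r
    by (metis dvd_trans primes_dvd_imp_eq)
  ultimately have "r dvd m" using r by (simp add: prime_dvd_mult_iff)
  then show ?thesis using pm m_def by simp
qed

end


context fgrp begin

lemma elem_prime_ord:
  assumes g: "g \<in> carrier G" and r: "Factorial_Ring.prime r" and rd: "r dvd ord g"
  shows "\<exists>a\<in>carrier G. ord a = r"
proof -
  have o1: "ord g \<ge> 1" using ord_ge_1[OF fin g] .
  obtain k where k: "ord g = r * k" using rd by (elim dvdE)
  have k0: "k \<noteq> 0" using k o1 by auto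
  have r0: "r \<noteq> 0" using r by auto
  have "ord (g [^] k) = ord g div k" using ord_pow[OF g _ k0] k by simp
  also have "\<dots> = r" using k k0 by simp
  finally show ?thesis using g by blast
qed

lemma cauchy:
  assumes r: "Factorial_Ring.prime r" and rd: "r dvd order G"
  shows "\<exists>a\<in>carrier G. ord a = r"
proof -
  have "order G = r ^ 1 * (order G div r)" using rd by simp
  then have "\<exists>H. subgroup H G \<and> card H = r ^ 1"
    by (rule sylow_thm[OF r is_group _ fin])
  then obtain H where H: "subgroup H G" "card H = r" by auto
  have "card H \<noteq> 1" using H r by auto
  moreover have "\<one> \<in> H" using H subgroup.one_closed by blast
  have "H - {\<one>} \<noteq> {}"
  proof
    assume "H - {\<one>} = {}"
    then have "H \<subseteq> {\<one>}" by blast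
    then have "card H \<le> card {\<one>}" by (intro card_mono) auto
    then have "card H \<le> 1" by simp
    moreover have "1 < r" using prime_gt_1_nat[OF r] .
    ultimately show False using H by linarith
  qed
  then obtain x where x: "x \<in> H" "x \<noteq> \<one>" by blast
  have xG: "x \<in> carrier G" using x H subgroup.subset by blast
  interpret K: group "G\<lparr>carrier := H\<rparr>" using subgroup_imp_group[OF H(1)] .
  have "x [^]\<^bsub>G\<lparr>carrier := H\<rparr>\<^esub> order (G\<lparr>carrier := H\<rparr>) = \<one>\<^bsub>G\<lparr>carrier := H\<rparr>\<^esub>"
    using K.pow_order_eq_1 x by simp
  then have "x [^]\<^bsub>G\<lparr>carrier := H\<rparr>\<^esub> r = \<one>" using H by (simp add: order_def)
  then have "x [^] r = \<one>" using nat_pow_consistent[of x r H] by simp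
  then have "ord x dvd r" using xG by (simp add: pow_eq_id)
  moreover have "ord x \<noteq> 1" using ord_eq_1 xG x by blast
  ultimately have "ord x = r" using r unfolding prime_nat_iff by blast
  then show ?thesis using xG by blast
qed

lemma nbr_prime:
  assumes a: "a \<in> carrier G" and oa: "ord a = p" and p: "Factorial_Ring.prime p"
  shows "nbr a = {z \<in> carrier G. \<not> p dvd ord z}"
  unfolding set_eq_iff
proof (intro allI)
  fix z
  show "z \<in> nbr a \<longleftrightarrow> z \<in> {z \<in> carrier G. \<not> p dvd ord z}"
  proof (cases "z = a")
    case True
    then show ?thesis using oa by (simp add: nbr_def coprime_adj_def)
  next
    case False
    then show ?thesis using oa gcd_prime_one_iff[OF p, of "ord z"] by (simp add: nbr_def coprime_adj_def)
  qed
qed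

lemma no_mixed:
  assumes D: "\<forall>x\<in>carrier G. \<forall>y\<in>carrier G. x \<noteq> \<one> \<longrightarrow> y \<noteq> \<one> \<longrightarrow> card (nbr x) \<le> card (nbr y)"
    and g: "g \<in> carrier G" and r: "Factorial_Ring.prime r" and s: "Factorial_Ring.prime s"
    and rs: "r \<noteq> s" and rd: "r dvd ord g" and sd: "s dvd ord g"
  shows False
proof -
  obtain a where a: "a \<in> carrier G" "ord a = r" using elem_prime_ord[OF g r rd] by blast
  obtain b where b: "b \<in> carrier G" "ord b = s" using elem_prime_ord[OF g s sd] by blast
  have g1: "g \<noteq> \<one>"
  proof
    assume "g = \<one>"
    then have "r dvd 1" using rd by simp
    then show False using r by simp
  qed
  have a1: "a \<noteq> \<one>"
  proof
    assume "a = \<one>"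
    then have "r = 1" using a by simp
    then show False using r by simp
  qed
  have sub: "nbr g \<subseteq> nbr a"
  proof
    fix z assume "z \<in> nbr g"
    then have z: "z \<in> carrier G" "gcd (ord g) (ord z) = 1" by (auto simp: nbr_def coprime_adj_def)
    have "\<not> r dvd ord z"
    proof
      assume "r dvd ord z"
      then have "r dvd gcd (ord g) (ord z)" using rd by simp
      then show False using z(2) r by simp
    qed
    then show "z \<in> nbr a" using nbr_prime[OF a r] z by simp
  qed
  have "\<not> r dvd s" using primes_dvd_imp_eq[OF r s] rs by blast
  then have bin: "b \<in> nbr a" using nbr_prime[OF a r] b by simp
  have bout: "b \<notin> nbr g"
  proof
    assume "b \<in> nbr g"
    then have "gcd (ord g) s = 1" using b by (auto simp: nbr_def coprime_adj_def)
    then show False using sd s by (simp add: gcd_nat.absorb2)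
  qed
  have "card (nbr g) < card (nbr a)"
    using sub bin bout fin by (intro psubset_card_mono) (auto simp: nbr_def)
  moreover have "card (nbr a) \<le> card (nbr g)" using D a(1) g a1 g1 by blast
  ultimately show False by simp
qed

end


lemma funpow_split:
  assumes "i \<le> (j::nat)"
  shows "(f ^^ (j - i)) ((f ^^ i) x) = (f ^^ j) x"
proof -
  have "(f ^^ (j - i)) ((f ^^ i) x) = (f ^^ (j - i + i)) x" by (simp add: funpow_add)
  then show ?thesis using assms by simp
qed

lemma perm_prime_dvd:
  fixes f :: "'a \<Rightarrow> 'a"
  assumes fin: "finite A" and inv: "\<And>x. x \<in> A \<Longrightarrow> f x \<in> A"
    and per: "\<And>x. x \<in> A \<Longrightarrow> (f ^^ p) x = x"
    and nofix: "\<And>x i. x \<in> A \<Longrightarrow> 0 < i \<Longrightarrow> i < p \<Longrightarrow> (f ^^ i) x \<noteq> x"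
    and p0: "0 < p"
  shows "p dvd card A"
proof -
  have iterA: "(f ^^ i) x \<in> A" if "x \<in> A" for x i
    using that by (induction i) (auto intro: inv)
  have perk: "(f ^^ (p * k)) x = x" if "x \<in> A" for x k
  proof (induction k)
    case (Suc k)
    have "(f ^^ (p * Suc k)) x = (f ^^ p) ((f ^^ (p * k)) x)"
      by (simp add: funpow_add)
    then show ?case using Suc per[OF that] by simp
  qed simp
  have modp: "(f ^^ i) x = (f ^^ (i mod p)) x" if "x \<in> A" for x i
  proof -
    have "(f ^^ i) x = (f ^^ (i mod p + p * (i div p))) x" by (simp only: mod_mult_div_eq)
    also have "\<dots> = (f ^^ (i mod p)) ((f ^^ (p * (i div p))) x)" by (simp only: funpow_add o_apply)
    finally show ?thesis using perk[OF that] by simp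
  qed
  define orb where "orb x = range (\<lambda>i. (f ^^ i) x)" for x
  have orbA: "orb x \<subseteq> A" if "x \<in> A" for x using iterA that by (auto simp: orb_def)
  have orb_lt: "orb x = (\<lambda>i. (f ^^ i) x) ` {..<p}" if "x \<in> A" for x
  proof
    show "orb x \<subseteq> (\<lambda>i. (f ^^ i) x) ` {..<p}"
    proof
      fix z assume "z \<in> orb x"
      then obtain i where "z = (f ^^ i) x" by (auto simp: orb_def)
      then have "z = (f ^^ (i mod p)) x" using modp[OF that] by simp
      moreover have "i mod p \<in> {..<p}" using p0 by simp
      ultimately show "z \<in> (\<lambda>i. (f ^^ i) x) ` {..<p}" by blast
    qed
  qed (auto simp: orb_def)
  have card_orb: "card (orb x) = p" if x: "x \<in> A" for x
  proof -
    have "inj_on (\<lambda>i. (f ^^ i) x) {..<p}"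
    proof (rule inj_onI)
      fix i j assume i: "i \<in> {..<p}" and j: "j \<in> {..<p}" and e: "(f ^^ i) x = (f ^^ j) x"
      show "i = j"
      proof (rule ccontr)
        assume "i \<noteq> j"
        then consider "i < j" | "j < i" by linarith
        then show False
        proof cases
          case 1
          have "(f ^^ (j - i)) ((f ^^ i) x) = (f ^^ j) x"
            using 1 by (intro funpow_split) simp
          then show False using nofix[OF iterA[OF x], of "j - i"] 1 j e by auto
        next
          case 2
          have "(f ^^ (i - j)) ((f ^^ j) x) = (f ^^ i) x"
            using 2 by (intro funpow_split) simp
          then show False using nofix[OF iterA[OF x], of "i - j"] 2 i e by auto
        qed
      qed
    qed
    then show ?thesis using orb_lt[OF x] by (simp add: card_image)
  qed
  have orb_sub: "orb y \<subseteq> orb x" if yo: "y \<in> orb x" for x y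
  proof
    fix z assume "z \<in> orb y"
    then obtain k where k: "z = (f ^^ k) y" by (auto simp: orb_def)
    obtain m where m: "y = (f ^^ m) x" using yo unfolding orb_def by blast
    have "z = (f ^^ (k + m)) x" using k m by (simp add: funpow_add)
    then show "z \<in> orb x" by (auto simp: orb_def)
  qed
  have orb_back: "x \<in> orb y" if yo: "y \<in> orb x" and xA: "x \<in> A" for x y
  proof -
    obtain m where m: "y = (f ^^ m) x" using yo unfolding orb_def by blast
    have "(f ^^ (p * Suc m - m)) y = (f ^^ (p * Suc m)) x"
    proof -
      have "m \<le> p * Suc m" using p0 by (cases p) auto
      then show ?thesis using funpow_split[of m "p * Suc m" f x] m by simp
    qed
    also have "\<dots> = x" using perk[OF xA] .
    finally show ?thesis unfolding orb_def by (metis rangeI)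
  qed
  define C where "C = orb ` A"
  have UC: "\<Union>C = A"
  proof
    show "\<Union>C \<subseteq> A" using orbA by (auto simp: C_def)
    show "A \<subseteq> \<Union>C"
    proof
      fix x assume "x \<in> A"
      moreover have "x \<in> orb x" unfolding orb_def by (metis funpow_0 rangeI)
      ultimately show "x \<in> \<Union>C" by (auto simp: C_def)
    qed
  qed
  have "p dvd card (\<Union>C)"
  proof (rule dvd_partition)
    show "finite (\<Union>C)" using UC fin by simp
    show "\<forall>c\<in>C. p dvd card c" using card_orb by (auto simp: C_def)
    show "\<forall>c1\<in>C. \<forall>c2\<in>C. c1 \<noteq> c2 \<longrightarrow> c1 \<inter> c2 = {}"
    proof (intro ballI impI)
      fix c1 c2 assume c1: "c1 \<in> C" and c2: "c2 \<in> C" and ne: "c1 \<noteq> c2"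
      obtain x y where xy: "x \<in> A" "y \<in> A" "c1 = orb x" "c2 = orb y" using c1 c2 by (auto simp: C_def)
      show "c1 \<inter> c2 = {}"
      proof (rule ccontr)
        assume "c1 \<inter> c2 \<noteq> {}"
        then obtain z where z: "z \<in> orb x" "z \<in> orb y" using xy by auto
        have "orb x = orb z" using orb_sub[OF z(1)] orb_sub[OF orb_back[OF z(1) xy(1)]] by blast
        moreover have "orb y = orb z" using orb_sub[OF z(2)] orb_sub[OF orb_back[OF z(2) xy(2)]] by blast
        ultimately show False using ne xy by simp
      qed
    qed
  qed
  then show ?thesis using UC by simp
qed



context fgrp begin

lemma conj_count:
  assumes a: "a \<in> carrier G" and oa: "ord a = p" and p: "Factorial_Ring.prime p"
    and hyp: "\<And>z c. z \<in> carrier G \<Longrightarrow> P (ord z) \<Longrightarrow> c \<in> carrier G \<Longrightarrow> ord c = p \<Longrightarrow> c \<otimes> z = z \<otimes> c \<Longrightarrow> False"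
  shows "p dvd card {z \<in> carrier G. P (ord z)}"
proof (rule perm_prime_dvd[where f = "\<lambda>w. a \<otimes> w \<otimes> inv a"])
  show "finite {z \<in> carrier G. P (ord z)}" using fin by simp
  show "0 < p" using p prime_gt_0_nat by blast
  fix x assume x: "x \<in> {z \<in> carrier G. P (ord z)}"
  then have xG: "x \<in> carrier G" and Px: "P (ord x)" by auto
  show "a \<otimes> x \<otimes> inv a \<in> {z \<in> carrier G. P (ord z)}"
    using a xG Px ord_conj[OF a xG] by simp
  have "a [^] p = \<one>" using a oa pow_ord_eq_1 by blast
  then show "((\<lambda>w. a \<otimes> w \<otimes> inv a) ^^ p) x = x"
    using conj_iter[OF a xG, of p] a xG by simp
  fix i assume i0: "0 < i" and ip: "i < p"
  define c where "c = a [^] i"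
  have cG: "c \<in> carrier G" using a by (simp add: c_def)
  have "gcd p i = 1"
  proof -
    have "\<not> p dvd i" using i0 ip by (auto dest: dvd_imp_le)
    then show ?thesis using gcd_prime_one_iff[OF p] by simp
  qed
  then have oc: "ord c = p" using ord_pow_gen[OF a, of i] i0 oa by (simp add: c_def)
  show "((\<lambda>w. a \<otimes> w \<otimes> inv a) ^^ i) x \<noteq> x"
  proof
    assume "((\<lambda>w. a \<otimes> w \<otimes> inv a) ^^ i) x = x"
    then have e: "c \<otimes> x \<otimes> inv c = x" using conj_iter[OF a xG, of i] by (simp add: c_def)
    have "c \<otimes> x = c \<otimes> x \<otimes> inv c \<otimes> c" using cG xG by (simp add: m_assoc)
    also have "\<dots> = x \<otimes> c" using e by simp
    finally show False using hyp[OF xG Px cG oc] by simp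
  qed
qed

lemma two_primes:
  assumes "\<not> is_p_group G"
  obtains p q where "Factorial_Ring.prime (p::nat)" "Factorial_Ring.prime q" "p \<noteq> q"
    "p dvd order G" "q dvd order G"
proof -
  define n where "n = order G"
  have n0: "n \<noteq> 0" using fin by (simp add: n_def order_gt_0_iff_finite[symmetric])
  have "n \<noteq> 1"
  proof
    assume "n = 1"
    then have "is_p_group G" unfolding is_p_group_def
      using n_def by (intro exI[of _ 2] exI[of _ 0]) simp
    then show False using assms by simp
  qed
  then obtain p where p: "Factorial_Ring.prime p" "p dvd n" using prime_factor_nat by blast
  obtain y where y: "n = p ^ multiplicity p n * y" "\<not> p dvd y"
    using multiplicity_decompose'[of n p] n0 p(1) by (metis not_prime_unit)
  have "y \<noteq> 1"
  proof
    assume "y = 1"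
    then have "is_p_group G" unfolding is_p_group_def using y p n_def by auto
    then show False using assms by simp
  qed
  then obtain q where q: "Factorial_Ring.prime q" "q dvd y" using prime_factor_nat by blast
  have "p \<noteq> q" using q y by auto
  moreover have "q dvd n" using q y by (metis dvd_mult dvd_mult2 mult.commute)
  ultimately show ?thesis using that p q n_def by blast
qed

lemma not_pgroup_false:
  assumes D: "\<forall>x\<in>carrier G. \<forall>y\<in>carrier G. x \<noteq> \<one> \<longrightarrow> y \<noteq> \<one> \<longrightarrow> card (nbr x) \<le> card (nbr y)"
    and np: "\<not> is_p_group G"
  shows False
proof -
  obtain p q where p: "Factorial_Ring.prime (p::nat)" and q: "Factorial_Ring.prime q" and pq: "p \<noteq> q"
    and pd: "p dvd order G" and qd: "q dvd order G"
    using two_primes[OF np] by blast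
  obtain a where a: "a \<in> carrier G" "ord a = p" using cauchy[OF p pd] by blast
  obtain b where b: "b \<in> carrier G" "ord b = q" using cauchy[OF q qd] by blast
  have a1: "a \<noteq> \<one>" using a p by (metis ord_id not_prime_1)
  have b1: "b \<noteq> \<one>" using b q by (metis ord_id not_prime_1)
  define Xp where "Xp = {z \<in> carrier G. p dvd ord z}"
  define Xq where "Xq = {z \<in> carrier G. q dvd ord z}"
  define Z where "Z = {z \<in> carrier G. \<not> p dvd ord z \<and> \<not> q dvd ord z \<and> ord z \<noteq> 1}"
  have fXp: "finite Xp" and fXq: "finite Xq" and fZ: "finite Z"
    using fin by (auto simp: Xp_def Xq_def Z_def)
  have na: "nbr a = carrier G - Xp" using nbr_prime[OF a p] by (auto simp: Xp_def)
  have nb: "nbr b = carrier G - Xq" using nbr_prime[OF b q] by (auto simp: Xq_def)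
  have "card (nbr a) = card (nbr b)" using D a(1) b(1) a1 b1 by (meson antisym)
  then have "card (carrier G) - card Xp = card (carrier G) - card Xq"
    using na nb fXp fXq by (simp add: card_Diff_subset Xp_def Xq_def)
  moreover have "card Xp \<le> card (carrier G)" "card Xq \<le> card (carrier G)"
    using fin by (auto intro!: card_mono simp: Xp_def Xq_def)
  ultimately have cpq: "card Xp = card Xq" by linarith
  have dq: "p dvd card Xq" unfolding Xq_def
  proof (rule conj_count[OF a p])
    fix z c assume z: "z \<in> carrier G" "q dvd ord z" and c: "c \<in> carrier G" "ord c = p"
      and cm: "c \<otimes> z = z \<otimes> c"
    show False
    proof (cases "p dvd ord z")
      case True
      then show False using no_mixed[OF D z(1) p q pq True z(2)] by simp
    next
      case False
      have "p dvd ord (c \<otimes> z) \<and> q dvd ord (c \<otimes> z)" by (rule mixed[OF c(1) z(1) cm c(2) p False q z(2)])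
      then show False using no_mixed[OF D _ p q pq] c z by blast
    qed
  qed
  have dZ: "p dvd card Z" unfolding Z_def
  proof (rule conj_count[OF a p])
    fix z c assume z: "z \<in> carrier G" "\<not> p dvd ord z \<and> \<not> q dvd ord z \<and> ord z \<noteq> 1"
      and c: "c \<in> carrier G" "ord c = p" and cm: "c \<otimes> z = z \<otimes> c"
    obtain r where r: "Factorial_Ring.prime r" "r dvd ord z" using prime_factor_nat z by blast
    have rp: "p \<noteq> r" using r z by auto
    have "p dvd ord (c \<otimes> z) \<and> r dvd ord (c \<otimes> z)"
      using mixed[OF c(1) z(1) cm c(2) p _ r(1) r(2)] z by blast
    then show False using no_mixed[OF D _ p r(1) rp] c z by blast
  qed
  have disj: "Xp \<inter> Xq = {}" using no_mixed[OF D _ p q pq] by (auto simp: Xp_def Xq_def)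
  have one: "\<one> \<notin> Xp \<union> Xq \<union> Z" using p q by (auto simp: Xp_def Xq_def Z_def)
  have cover: "carrier G = insert \<one> (Xp \<union> Xq \<union> Z)"
    using ord_eq_1 by (auto simp: Xp_def Xq_def Z_def)
  have "card (carrier G) = Suc (card (Xp \<union> Xq \<union> Z))"
    using cover one fXp fXq fZ by (metis card_insert_disjoint finite_Un)
  also have "card (Xp \<union> Xq \<union> Z) = card (Xp \<union> Xq) + card Z"
    using fXp fXq fZ by (intro card_Un_disjoint) (auto simp: Xp_def Xq_def Z_def)
  also have "card (Xp \<union> Xq) = card Xp + card Xq"
    using fXp fXq disj by (intro card_Un_disjoint) auto
  finally have tot: "card (carrier G) = Suc (card Xp + card Xq + card Z)" .
  have "p dvd card (carrier G)" using pd by (simp add: order_def)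
  moreover have "p dvd card Xp + card Xq + card Z" using dq dZ cpq by simp
  ultimately have "p dvd 1" using tot by (metis Suc_eq_plus1 dvd_add_right_iff)
  then show False using p by simp
qed

end

theorem mainTheorem13:
  fixes G :: "('a, 'b) monoid_scheme"
  assumes "group G" and "finite (carrier G)"
  shows "minimally_connected (carrier G) (coprime_adj G) \<longleftrightarrow> is_p_group G"
proof -
  interpret fgrp G using assms by (simp add: fgrp_def fgrp_axioms_def)
  show ?thesis
  proof
    assume "is_p_group G"
    then obtain p m where "Factorial_Ring.prime (p::nat)" "order G = p ^ m"
      unfolding is_p_group_def by blast
    then show "minimally_connected (carrier G) (coprime_adj G)" by (rule pgroup_mc)
  next
    assume mc: "minimally_connected (carrier G) (coprime_adj G)"
    show "is_p_group G"
    proof (rule ccontr)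
      assume np: "\<not> is_p_group G"
      have n1: "card (carrier G) \<noteq> 1"
      proof
        assume "card (carrier G) = 1"
        then have "is_p_group G" unfolding is_p_group_def order_def
          by (intro exI[of _ 2] exI[of _ 0]) simp
        then show False using np by simp
      qed
      have D: "\<forall>x\<in>carrier G. \<forall>y\<in>carrier G. x \<noteq> \<one>\<^bsub>G\<^esub> \<longrightarrow> y \<noteq> \<one>\<^bsub>G\<^esub> \<longrightarrow> card (nbr x) \<le> card (nbr y)"
      proof (intro ballI impI)
        fix x y assume "x \<in> carrier G" "y \<in> carrier G" "x \<noteq> \<one>\<^bsub>G\<^esub>" "y \<noteq> \<one>\<^bsub>G\<^esub>"
        then show "card (nbr x) \<le> card (nbr y)"
          using deg_le_kappa[OF mc n1] kappa_le_deg by (meson le_trans)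
      qed
      show False using not_pgroup_false[OF D np] by blast
    qed
  qed
qed



end
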